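(* (a) For an integer $k\ge2$, with $P_k$, $Z_k$, $\Lambda_k$, $p_j$ as below, every global trajectory $\gamma$ of $Z_k$ with $\gamma(0)\in\Lambda_k$ has the property that for every $t\in\mathbb{R}$ there exists a unique $t^*\in[t,t+1)$ with $\gamma(t^* )\in\{(p_j,0):j=1,\dots,k-1\}$. (b) Every global trajectory $\gamma$ of $Z_\infty$ with $\gamma(0)\in\Lambda_\infty$ has the property that for every $t\in\mathbb{R}$ there exists a unique $t^*\in[t,t+1)$ with $\gamma(t^* )\in\{(j,0):j\in\mathbb{Z}\}$.
   Context: $P_k(x)=-\left(x+\frac{k-1}{2}\right)\left(x-\frac{k-1}{2}\right)\prod_{i=1}^{k-1}\left(x-\left(i-\frac k2\right)\right)^2$, $r_0=\frac{1-k}{2}$, $r_1=\frac{k-1}{2}$, $p_j=j-\frac k2$; $Z_k=(X_k,Y_k)$ with $X_k(x,y)=(1,P_k'(x))$ on $y\ge0$, $Y_k(x,y)=(-1,P_k'(x))$ on $y\le0$; $\Lambda_k=\{(x,\pm P_k(x)):r_0\le x\le r_1\}$. $Z_\infty$: $X_\infty(x,y)=(1,2\sin(2\pi x))$ on $y\ge0$, $Y_\infty(x,y)=(-1,2\sin(2\pi x))$ on $y\le0$; $\Lambda_\infty=\{(x,\pm P_\infty(x)):x\in\mathbb{R}\}$ with $P_\infty(x)=\frac{1-\cos(2\pi x)}{\pi}$. PSVF conventions: switching manifold $\Sigma=\{y=0\}=f^{-1}(0)$, $f(x,y)=y$; $Wf=\langle\nabla f,W\rangle$, $W^2f=\langle\nabla(Wf),W\rangle$;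 crossing region $\Sigma^c=\{Xf\cdot Yf>0\}$ ($\Sigma^{c\pm}$ according to the common sign), sliding $\Sigma^s=\{Xf<0<Yf\}$, escaping $\Sigma^e=\{Yf<0<Xf\}$, sliding field $Z^T=(Yf\,X-Xf\,Y)/(Yf-Xf)$. Local trajectories (Filippov): off $\Sigma$ follow $X$ or $Y$; through $\Sigma^{c+}$ follow $Y$ for $t\le0$ and $X$ for $t\ge0$ (reversed on $\Sigma^{c-}$); on $\Sigma^e$ follow $Z^T$ for $t\le0$ and one of $X,Y,Z^T$ for $t\ge0$ (reversed on $\Sigma^s$); at a regular tangency (not invisible for both fields) follow one of $X,Y,Z^T$ for $t\le0$ and one for $t\ge0$; singular tangencies are stationary. A global trajectory $\gamma:\mathbb{R}\to\mathbb{R}^2$ is a concatenation of orientation-preserving local trajectories $\sigma_i$ on $[t_i,t_{i+1}]$, $i\in\mathbb{Z}$, with $\sigma_i(t_{i+1})=\sigma_{i+1}(t_{i+1})$, $t_i\to\pm\infty$. *)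

theory Defs
  imports "HOL-Analysis.Analysis"
begin

type_synonym vf = "real \<times> real \<Rightarrow> real \<times> real"

text \<open>f(x,y) = y, so grad f = (0,1).\<close>
definition sw :: "real \<times> real \<Rightarrow> real" where
  "sw p = snd p"

definition Sigma :: "(real \<times> real) set" where
  "Sigma = {p. sw p = 0}"

definition Lie1 :: "vf \<Rightarrow> real \<times> real \<Rightarrow> real" where
  "Lie1 W p = (0, 1) \<bullet> W p"

definition Lie2 :: "vf \<Rightarrow> real \<times> real \<Rightarrow> real" where
  "Lie2 W p = frechet_derivative (Lie1 W) (at p) (W p)"

definition cross_plus :: "vf \<Rightarrow> vf \<Rightarrow> (real \<times> real) set" where
  "cross_plus X Y = {p \<in> Sigma. Lie1 X p > 0 \<and> Lie1 Y p > 0}"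

definition cross_minus :: "vf \<Rightarrow> vf \<Rightarrow> (real \<times> real) set" where
  "cross_minus X Y = {p \<in> Sigma. Lie1 X p < 0 \<and> Lie1 Y p < 0}"

definition sliding :: "vf \<Rightarrow> vf \<Rightarrow> (real \<times> real) set" where
  "sliding X Y = {p \<in> Sigma. Lie1 X p < 0 \<and> 0 < Lie1 Y p}"

definition escaping :: "vf \<Rightarrow> vf \<Rightarrow> (real \<times> real) set" where
  "escaping X Y = {p \<in> Sigma. Lie1 Y p < 0 \<and> 0 < Lie1 X p}"

definition tangency :: "vf \<Rightarrow> vf \<Rightarrow> (real \<times> real) set" where
  "tangency X Y = {p \<in> Sigma. Lie1 X p = 0 \<or> Lie1 Y p = 0}"

text \<open>Singular tangency: invisible for both fields (X acts on y >= 0, Y on y <= 0).\<close>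
definition singular_tangency :: "vf \<Rightarrow> vf \<Rightarrow> (real \<times> real) set" where
  "singular_tangency X Y = {p \<in> Sigma. Lie1 X p = 0 \<and> Lie2 X p < 0 \<and> Lie1 Y p = 0 \<and> Lie2 Y p > 0}"

definition regular_tangency :: "vf \<Rightarrow> vf \<Rightarrow> (real \<times> real) set" where
  "regular_tangency X Y = tangency X Y - singular_tangency X Y"

definition ZT :: "vf \<Rightarrow> vf \<Rightarrow> vf" where
  "ZT X Y p = (1 / (Lie1 Y p - Lie1 X p)) *\<^sub>R (Lie1 Y p *\<^sub>R X p - Lie1 X p *\<^sub>R Y p)"

definition follows :: "vf \<Rightarrow> (real \<Rightarrow> real \<times> real) \<Rightarrow> real set \<Rightarrow> bool" where
  "follows V \<phi> S \<longleftrightarrow> (\<forall>t\<in>S. (\<phi> has_vector_derivative V (\<phi> t)) (at t within S))"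

definition fwdX :: "vf \<Rightarrow> (real \<Rightarrow> real \<times> real) \<Rightarrow> real \<Rightarrow> bool" where
  "fwdX X \<phi> b \<longleftrightarrow> follows X \<phi> {0..b} \<and> (\<forall>t\<in>{0<..b}. sw (\<phi> t) > 0)"
definition fwdY :: "vf \<Rightarrow> (real \<Rightarrow> real \<times> real) \<Rightarrow> real \<Rightarrow> bool" where
  "fwdY Y \<phi> b \<longleftrightarrow> follows Y \<phi> {0..b} \<and> (\<forall>t\<in>{0<..b}. sw (\<phi> t) < 0)"
definition fwdZ :: "vf \<Rightarrow> vf \<Rightarrow> (real \<times> real) set \<Rightarrow> (real \<Rightarrow> real \<times> real) \<Rightarrow> real \<Rightarrow> bool" where
  "fwdZ X Y R \<phi> b \<longleftrightarrow> follows (ZT X Y) \<phi> {0..b} \<and> (\<forall>t\<in>{0<..b}. \<phi> t \<in> R)"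
definition bwdX :: "vf \<Rightarrow> (real \<Rightarrow> real \<times> real) \<Rightarrow> real \<Rightarrow> bool" where
  "bwdX X \<phi> a \<longleftrightarrow> follows X \<phi> {a..0} \<and> (\<forall>t\<in>{a..<0}. sw (\<phi> t) > 0)"
definition bwdY :: "vf \<Rightarrow> (real \<Rightarrow> real \<times> real) \<Rightarrow> real \<Rightarrow> bool" where
  "bwdY Y \<phi> a \<longleftrightarrow> follows Y \<phi> {a..0} \<and> (\<forall>t\<in>{a..<0}. sw (\<phi> t) < 0)"
definition bwdZ :: "vf \<Rightarrow> vf \<Rightarrow> (real \<times> real) set \<Rightarrow> (real \<Rightarrow> real \<times> real) \<Rightarrow> real \<Rightarrow> bool" where
  "bwdZ X Y R \<phi> a \<longleftrightarrow> follows (ZT X Y) \<phi> {a..0} \<and> (\<forall>t\<in>{a..<0}. \<phi> t \<in> R)"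

definition local_traj :: "vf \<Rightarrow> vf \<Rightarrow> real \<times> real \<Rightarrow> real \<Rightarrow> real \<Rightarrow> (real \<Rightarrow> real \<times> real) \<Rightarrow> bool" where
  "local_traj X Y p a b \<phi> \<longleftrightarrow> a \<le> 0 \<and> 0 \<le> b \<and> \<phi> 0 = p \<and>
     (sw p > 0 \<longrightarrow> follows X \<phi> {a..b} \<and> (\<forall>t\<in>{a<..<b}. sw (\<phi> t) > 0)) \<and>
     (sw p < 0 \<longrightarrow> follows Y \<phi> {a..b} \<and> (\<forall>t\<in>{a<..<b}. sw (\<phi> t) < 0)) \<and>
     (p \<in> cross_plus X Y \<longrightarrow> bwdY Y \<phi> a \<and> fwdX X \<phi> b) \<and>
     (p \<in> cross_minus X Y \<longrightarrow> bwdX X \<phi> a \<and> fwdY Y \<phi> b) \<and>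
     (p \<in> escaping X Y \<longrightarrow> bwdZ X Y (escaping X Y) \<phi> a \<and>
        (fwdX X \<phi> b \<or> fwdY Y \<phi> b \<or> fwdZ X Y (escaping X Y) \<phi> b)) \<and>
     (p \<in> sliding X Y \<longrightarrow> (bwdX X \<phi> a \<or> bwdY Y \<phi> a \<or> bwdZ X Y (sliding X Y) \<phi> a) \<and>
        fwdZ X Y (sliding X Y) \<phi> b) \<and>
     (p \<in> regular_tangency X Y \<longrightarrow>
        (bwdX X \<phi> a \<or> bwdY Y \<phi> a \<or> bwdZ X Y (sliding X Y \<union> escaping X Y) \<phi> a) \<and>
        (fwdX X \<phi> b \<or> fwdY Y \<phi> b \<or> fwdZ X Y (sliding X Y \<union> escaping X Y) \<phi> b)) \<and>
     (p \<in> singular_tangency X Y \<longrightarrow> (\<forall>t\<in>{a..b}. \<phi> t = p))"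

definition global_traj :: "vf \<Rightarrow> vf \<Rightarrow> (real \<Rightarrow> real \<times> real) \<Rightarrow> bool" where
  "global_traj X Y \<gamma> \<longleftrightarrow> (\<exists>T :: int \<Rightarrow> real. strict_mono T \<and>
      filterlim T at_top at_top \<and> filterlim T at_bot at_bot \<and>
      (\<forall>i. \<exists>s\<in>{T i..T (i+1)}.
          local_traj X Y (\<gamma> s) (T i - s) (T (i+1) - s) (\<lambda>\<tau>. \<gamma> (s + \<tau>))))"

definition Pk :: "nat \<Rightarrow> real \<Rightarrow> real" where
  "Pk k x = - (x + (real k - 1) / 2) * (x - (real k - 1) / 2) *
      (\<Prod>i\<in>{1..k-1}. (x - (real i - real k / 2))^2)"

definition r0 :: "nat \<Rightarrow> real" where "r0 k = (1 - real k) / 2"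
definition r1 :: "nat \<Rightarrow> real" where "r1 k = (real k - 1) / 2"
definition pj :: "nat \<Rightarrow> nat \<Rightarrow> real" where "pj k j = real j - real k / 2"

definition Xk :: "nat \<Rightarrow> vf" where "Xk k = (\<lambda>(x, y). (1, deriv (Pk k) x))"
definition Yk :: "nat \<Rightarrow> vf" where "Yk k = (\<lambda>(x, y). (-1, deriv (Pk k) x))"

definition Lambdak :: "nat \<Rightarrow> (real \<times> real) set" where
  "Lambdak k = {(x, Pk k x) | x. r0 k \<le> x \<and> x \<le> r1 k} \<union> {(x, - Pk k x) | x. r0 k \<le> x \<and> x \<le> r1 k}"

definition Xinf :: vf where "Xinf = (\<lambda>(x, y). (1, 2 * sin (2 * pi * x)))"
definition Yinf :: vf where "Yinf = (\<lambda>(x, y). (-1, 2 * sin (2 * pi * x)))"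
definition Pinf :: "real \<Rightarrow> real" where "Pinf x = (1 - cos (2 * pi * x)) / pi"

definition Lambdainf :: "(real \<times> real) set" where
  "Lambdainf = {(x, Pinf x) | x. True} \<union> {(x, - Pinf x) | x. True}"

end

theory Submission
  imports Defs "HOL-Computational_Algebra.Polynomial"
begin


definition XF :: "(real \<Rightarrow> real) \<Rightarrow> vf" where "XF Q = (\<lambda>(x,y). (1, Q x))"
definition YF :: "(real \<Rightarrow> real) \<Rightarrow> vf" where "YF Q = (\<lambda>(x,y). (-1, Q x))"
definition LamF :: "(real \<Rightarrow> real) \<Rightarrow> real set \<Rightarrow> (real \<times> real) set" where
  "LamF P I = {(x, P x) | x. x \<in> I} \<union> {(x, - P x) | x. x \<in> I}"
definition EF :: "real \<Rightarrow> real \<times> real \<Rightarrow> complex" where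
  "EF c0 q = Complex (cos (2*pi*(fst q + c0))) (sgn (snd q) * sin (2*pi*(fst q + c0)))"
definition good :: "(real \<Rightarrow> real) \<Rightarrow> (real \<Rightarrow> real \<times> real) \<Rightarrow> real \<Rightarrow> real \<Rightarrow> bool" where
  "good Q \<phi> u v \<longleftrightarrow> u = v \<or> (follows (XF Q) \<phi> {u..v} \<and> (\<forall>t\<in>{u<..<v}. sw (\<phi> t) > 0))
     \<or> (follows (YF Q) \<phi> {u..v} \<and> (\<forall>t\<in>{u<..<v}. sw (\<phi> t) < 0))"

lemma Lie1_XF: "Lie1 (XF Q) p = Q (fst p)"
  by (simp add: Lie1_def XF_def case_prod_beta inner_prod_def)
lemma Lie1_YF: "Lie1 (YF Q) p = Q (fst p)"
  by (simp add: Lie1_def YF_def case_prod_beta inner_prod_def)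

lemma sliding_empty: "sliding (XF Q) (YF Q) = {}"
  by (auto simp: sliding_def Lie1_XF Lie1_YF)
lemma escaping_empty: "escaping (XF Q) (YF Q) = {}"
  by (auto simp: escaping_def Lie1_XF Lie1_YF)

lemma cis_eq_Complex: "cis a = Complex (cos a) (sin a)"
  by (simp add: complex_eq_iff)

locale psys =
  fixes P Q :: "real \<Rightarrow> real" and I :: "real set" and c0 :: real and Tgt :: "(real \<times> real) set"
  assumes Pder: "\<And>x. (P has_real_derivative Q x) (at x)"
  and H1: "\<And>x. x \<in> I \<Longrightarrow> P x = 0 \<Longrightarrow> sin (2*pi*(x+c0)) = 0"
  and H2: "\<And>x. 0 \<le> P x \<Longrightarrow> x \<in> I"
  and H3: "\<And>x. x \<in> I \<Longrightarrow> 0 \<le> P x"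
  and H5: "\<And>x. x \<in> I \<Longrightarrow> P x = 0 \<Longrightarrow> (x, 0) \<notin> singular_tangency (XF Q) (YF Q)"
  and H6: "\<And>q. q \<in> LamF P I \<Longrightarrow> q \<in> Tgt \<longleftrightarrow> EF c0 q = 1"
begin

lemma E_upper: "x \<in> I \<Longrightarrow> EF c0 (x, P x) = cis (2*pi*(x+c0))"
  using H3[of x] H1[of x]
  by (cases "P x = 0") (auto simp: EF_def cis_eq_Complex)

lemma E_lower: "x \<in> I \<Longrightarrow> EF c0 (x, - P x) = cis (-(2*pi*(x+c0)))"
  using H3[of x] H1[of x]
  by (cases "P x = 0") (auto simp: EF_def cis_eq_Complex)

lemma Pc: "continuous_on UNIV P"
  using Pder by (meson DERIV_isCont continuous_at_imp_continuous_on)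

lemma comp_derivs:
  assumes "\<And>t. t \<in> S \<Longrightarrow> (\<phi> has_vector_derivative (e, Q (fst (\<phi> t)))) (at t within S)"
  and "t \<in> S"
  shows "((\<lambda>t. fst (\<phi> t)) has_field_derivative e) (at t within S)"
    "((\<lambda>t. snd (\<phi> t)) has_field_derivative Q (fst (\<phi> t))) (at t within S)"
proof -
  have h: "(\<phi> has_derivative (\<lambda>h. h *\<^sub>R (e, Q (fst (\<phi> t))))) (at t within S)"
    using assms by (simp add: has_vector_derivative_def)
  have "((\<lambda>x. fst (\<phi> x)) has_derivative (\<lambda>h. fst (h *\<^sub>R (e, Q (fst (\<phi> t)))))) (at t within S)"
    by (rule has_derivative_fst[OF h])
  moreover have "(\<lambda>h. fst (h *\<^sub>R (e, Q (fst (\<phi> t))))) = (*) e" by auto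
  ultimately show "((\<lambda>t. fst (\<phi> t)) has_field_derivative e) (at t within S)"
    by (simp add: has_field_derivative_def)
  have "((\<lambda>x. snd (\<phi> x)) has_derivative (\<lambda>h. snd (h *\<^sub>R (e, Q (fst (\<phi> t)))))) (at t within S)"
    by (rule has_derivative_snd[OF h])
  moreover have "(\<lambda>h. snd (h *\<^sub>R (e, Q (fst (\<phi> t))))) = (*) (Q (fst (\<phi> t)))" by auto
  ultimately show "((\<lambda>t. snd (\<phi> t)) has_field_derivative Q (fst (\<phi> t))) (at t within S)"
    by (simp add: has_field_derivative_def)
qed

lemma conserved:
  assumes ee: "e * e = 1" and "\<And>t. t \<in> {u..v} \<Longrightarrow> (\<phi> has_vector_derivative (e, Q (fst (\<phi> t)))) (at t within {u..v})"
  shows "\<exists>cx. \<forall>t\<in>{u..v}. fst (\<phi> t) = e * t + cx" "\<exists>cy. \<forall>t\<in>{u..v}. snd (\<phi> t) - e * P (fst (\<phi> t)) = cy"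
proof -
  have "\<exists>c. \<forall>t\<in>{u..v}. fst (\<phi> t) - e * t = c"
  proof (rule has_field_derivative_zero_constant)
    fix t assume t: "t \<in> {u..v}"
    have "((\<lambda>t. fst (\<phi> t) - e * t) has_field_derivative e - e * 1) (at t within {u..v})"
      by (intro DERIV_diff comp_derivs(1)[OF assms(2) t] DERIV_cmult DERIV_ident)
    then show "((\<lambda>t. fst (\<phi> t) - e * t) has_field_derivative 0) (at t within {u..v})" by simp
  qed simp
  then show "\<exists>cx. \<forall>t\<in>{u..v}. fst (\<phi> t) = e * t + cx" by (metis diff_eq_eq add.commute)
  show "\<exists>cy. \<forall>t\<in>{u..v}. snd (\<phi> t) - e * P (fst (\<phi> t)) = cy"
  proof (rule has_field_derivative_zero_constant)
    fix t assume t: "t \<in> {u..v}"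
    have "((\<lambda>t. snd (\<phi> t) - e * P (fst (\<phi> t))) has_field_derivative
       Q (fst (\<phi> t)) - e * (Q (fst (\<phi> t)) * e)) (at t within {u..v})"
      by (intro DERIV_diff comp_derivs[OF assms(2) t] DERIV_cmult DERIV_chain2[OF Pder])
    moreover have "e * e = 1 \<Longrightarrow> Q (fst (\<phi> t)) - e * (Q (fst (\<phi> t)) * e) = 0"
      by (simp add: algebra_simps)
    ultimately show "((\<lambda>t. snd (\<phi> t) - e * P (fst (\<phi> t))) has_field_derivative 0) (at t within {u..v})"
      using ee by simp
  qed simp
qed

lemma E_arc: "x \<in> I \<Longrightarrow> e = 1 \<or> e = -1 \<Longrightarrow> EF c0 (x, e * P x) = cis (e*(2*pi*(x+c0)))"
  using E_upper E_lower by auto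

lemma Lam_arc: "x \<in> I \<Longrightarrow> e = 1 \<or> e = -1 \<Longrightarrow> (x, e * P x) \<in> LamF P I"
  by (auto simp: LamF_def)

lemma sub:
  assumes e: "e = 1 \<or> e = -1" and uv: "u \<le> v"
  and d: "\<And>t. t \<in> {u..v} \<Longrightarrow> (\<phi> has_vector_derivative (e, Q (fst (\<phi> t)))) (at t within {u..v})"
  and pos: "\<forall>t\<in>{u<..<v}. e * snd (\<phi> t) > 0"
  and w: "w \<in> {u..v}" and wL: "\<phi> w \<in> LamF P I"
  shows "\<forall>t\<in>{u..v}. \<phi> t \<in> LamF P I \<and> EF c0 (\<phi> t) = EF c0 (\<phi> w) * cis (2*pi*(t-w))"
proof (cases "u = v")
  case True
  then show ?thesis using w wL by auto
next
  case False
  then have uv': "u < v" using uv by auto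
  have ee: "e * e = 1" using e by auto
  obtain cx where cx: "\<forall>t\<in>{u..v}. fst (\<phi> t) = e * t + cx" using conserved(1)[OF ee d] by blast
  obtain cy where cy: "\<forall>t\<in>{u..v}. snd (\<phi> t) - e * P (fst (\<phi> t)) = cy" using conserved(2)[OF ee d] by blast
  have cont: "continuous_on (closure {u<..<v}) (\<lambda>t. P (e * t + cx) + e * cy)"
    by (intro continuous_intros continuous_on_compose2[OF Pc]) auto
  have nn: "0 \<le> e * snd (\<phi> t)" if t: "t \<in> {u..v}" for t
  proof -
    have eq: "e * snd (\<phi> s) = P (e * s + cx) + e * cy" if "s \<in> {u..v}" for s
    proof -
      have "snd (\<phi> s) = e * P (e * s + cx) + cy" using cx cy that by (metis diff_eq_eq add.commute)
      then show ?thesis using ee by (simp add: algebra_simps)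
    qed
    have "0 \<le> P (e * t + cx) + e * cy"
      apply (rule continuous_ge_on_closure[OF cont])
      using t uv' apply (simp add: closure_greaterThanLessThan)
      using pos eq by (metis greaterThanLessThan_iff atLeastAtMost_iff less_eq_real_def)
    then show ?thesis using eq t by simp
  qed
  obtain xw where xw: "xw \<in> I" "\<phi> w = (xw, P xw) \<or> \<phi> w = (xw, - P xw)"
    using wL unfolding LamF_def by blast
  have sw: "snd (\<phi> w) = e * P xw"
  proof -
    have "0 \<le> e * snd (\<phi> w)" using nn w by auto
    moreover have "0 \<le> P xw" using H3 xw by auto
    ultimately show ?thesis using xw(2) e by auto
  qed
  have fw: "fst (\<phi> w) = xw" using xw by auto
  have cy0: "cy = 0" using cy w sw fw by auto
  show ?thesis
  proof
    fix t assume t: "t \<in> {u..v}"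
    have st: "snd (\<phi> t) = e * P (fst (\<phi> t))" using cy t cy0 by auto
    have "0 \<le> P (fst (\<phi> t))" using nn[OF t] st ee by (metis mult.assoc mult_1)
    then have fI: "fst (\<phi> t) \<in> I" using H2 by auto
    have pt: "\<phi> t = (fst (\<phi> t), e * P (fst (\<phi> t)))" using st by (metis prod.collapse)
    have pw: "\<phi> w = (xw, e * P xw)" using sw fw by (metis prod.collapse)
    have ft: "fst (\<phi> t) = xw + e * (t - w)" using cx t w fw by (auto simp: algebra_simps)
    have "EF c0 (\<phi> t) = cis (e*(2*pi*(fst (\<phi> t)+c0)))" by (subst pt, rule E_arc[OF fI e])
    also have "\<dots> = cis (e*(2*pi*(xw+c0)) + 2*pi*(t-w))"
    proof -
      have "e*(2*pi*(xw + e * (t - w)+c0)) = e*(2*pi*(xw+c0)) + (e*e)*(2*pi*(t-w))"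
        by (simp add: algebra_simps)
      then show ?thesis unfolding ft using ee by simp
    qed
    also have "\<dots> = EF c0 (\<phi> w) * cis (2*pi*(t-w))"
      by (simp add: pw E_arc[OF xw(1) e] cis_mult)
    finally show "\<phi> t \<in> LamF P I \<and> EF c0 (\<phi> t) = EF c0 (\<phi> w) * cis (2*pi*(t-w))"
      using Lam_arc[OF fI e] pt by metis
  qed
qed

lemma good_prop:
  assumes "good Q \<phi> u v" "u \<le> v" "w \<in> {u..v}" "\<phi> w \<in> LamF P I"
  shows "\<forall>t\<in>{u..v}. \<phi> t \<in> LamF P I \<and> EF c0 (\<phi> t) = EF c0 (\<phi> w) * cis (2*pi*(t-w))"
proof -
  consider "u = v" | "follows (XF Q) \<phi> {u..v}" "\<forall>t\<in>{u<..<v}. sw (\<phi> t) > 0"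
    | "follows (YF Q) \<phi> {u..v}" "\<forall>t\<in>{u<..<v}. sw (\<phi> t) < 0"
    using assms(1) unfolding good_def by blast
  then show ?thesis
  proof cases
    case 1 then show ?thesis using assms by auto
  next
    case 2
    show ?thesis
      apply (rule sub[where e=1 and u=u and v=v and \<phi>=\<phi> and w=w, OF _ assms(2) _ _ assms(3,4)])
      using 2 by (auto simp: follows_def XF_def sw_def case_prod_beta)
  next
    case 3
    show ?thesis
      apply (rule sub[where e="-1" and u=u and v=v and \<phi>=\<phi> and w=w, OF _ assms(2) _ _ assms(3,4)])
      using 3 by (auto simp: follows_def YF_def sw_def case_prod_beta)
  qed
qed

end

lemma bwd_good:
  assumes "a \<le> 0" "bwdX (XF Q) \<phi> a \<or> bwdY (YF Q) \<phi> a \<or> bwdZ (XF Q) (YF Q) {} \<phi> a"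
  shows "good Q \<phi> a 0"
proof -
  consider "bwdX (XF Q) \<phi> a" | "bwdY (YF Q) \<phi> a" | "bwdZ (XF Q) (YF Q) {} \<phi> a" using assms(2) by blast
  then show ?thesis
  proof cases
    case 1 then show ?thesis unfolding good_def bwdX_def by auto
  next
    case 2 then show ?thesis unfolding good_def bwdY_def by auto
  next
    case 3
    then have "\<not> a < 0" unfolding bwdZ_def by auto
    then show ?thesis using assms(1) unfolding good_def by auto
  qed
qed

lemma fwd_good:
  assumes "0 \<le> b" "fwdX (XF Q) \<phi> b \<or> fwdY (YF Q) \<phi> b \<or> fwdZ (XF Q) (YF Q) {} \<phi> b"
  shows "good Q \<phi> 0 b"
proof -
  consider "fwdX (XF Q) \<phi> b" | "fwdY (YF Q) \<phi> b" | "fwdZ (XF Q) (YF Q) {} \<phi> b" using assms(2) by blast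
  then show ?thesis
  proof cases
    case 1 then show ?thesis unfolding good_def fwdX_def by auto
  next
    case 2 then show ?thesis unfolding good_def fwdY_def by auto
  next
    case 3
    then have "\<not> 0 < b" unfolding fwdZ_def by auto
    then show ?thesis using assms(1) unfolding good_def by auto
  qed
qed

lemma local_cases:
  assumes "local_traj (XF Q) (YF Q) p a b \<phi>"
  shows "good Q \<phi> a b \<or> (good Q \<phi> a 0 \<and> good Q \<phi> 0 b) \<or>
     (p \<in> singular_tangency (XF Q) (YF Q) \<and> (\<forall>t\<in>{a..b}. \<phi> t = p))"
proof -
  let ?X = "XF Q" and ?Y = "YF Q"
  have ab: "a \<le> 0" "0 \<le> b" using assms by (auto simp: local_traj_def)
  have L1: "sw p > 0 \<Longrightarrow> follows ?X \<phi> {a..b} \<and> (\<forall>t\<in>{a<..<b}. sw (\<phi> t) > 0)"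
    and L2: "sw p < 0 \<Longrightarrow> follows ?Y \<phi> {a..b} \<and> (\<forall>t\<in>{a<..<b}. sw (\<phi> t) < 0)"
    and L3: "p \<in> cross_plus ?X ?Y \<Longrightarrow> bwdY ?Y \<phi> a \<and> fwdX ?X \<phi> b"
    and L4: "p \<in> cross_minus ?X ?Y \<Longrightarrow> bwdX ?X \<phi> a \<and> fwdY ?Y \<phi> b"
    and L5: "p \<in> regular_tangency ?X ?Y \<Longrightarrow>
        (bwdX ?X \<phi> a \<or> bwdY ?Y \<phi> a \<or> bwdZ ?X ?Y {} \<phi> a) \<and>
        (fwdX ?X \<phi> b \<or> fwdY ?Y \<phi> b \<or> fwdZ ?X ?Y {} \<phi> b)"
    and L6: "p \<in> singular_tangency ?X ?Y \<Longrightarrow> (\<forall>t\<in>{a..b}. \<phi> t = p)"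
    using assms unfolding local_traj_def sliding_empty escaping_empty Un_empty by simp_all
  consider "sw p > 0" | "sw p < 0" | "sw p = 0" by linarith
  then show ?thesis
  proof cases
    case 1 then show ?thesis using L1 unfolding good_def by blast
  next
    case 2 then show ?thesis using L2 unfolding good_def by blast
  next
    case 3
    then have S: "p \<in> Sigma" by (simp add: Sigma_def)
    consider "Q (fst p) > 0" | "Q (fst p) < 0" | "Q (fst p) = 0" by linarith
    then show ?thesis
    proof cases
      case 1
      then have "p \<in> cross_plus (XF Q) (YF Q)" using S by (simp add: cross_plus_def Lie1_XF Lie1_YF)
      then have "good Q \<phi> a 0" "good Q \<phi> 0 b"
        using L3 bwd_good[OF ab(1)] fwd_good[OF ab(2)] by blast+
      then show ?thesis by blast
    next
      case 2
      then have "p \<in> cross_minus (XF Q) (YF Q)" using S by (simp add: cross_minus_def Lie1_XF Lie1_YF)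
      then have "good Q \<phi> a 0" "good Q \<phi> 0 b"
        using L4 bwd_good[OF ab(1)] fwd_good[OF ab(2)] by blast+
      then show ?thesis by blast
    next
      case 3
      then have T: "p \<in> tangency (XF Q) (YF Q)" using S by (simp add: tangency_def Lie1_XF Lie1_YF)
      show ?thesis
      proof (cases "p \<in> singular_tangency (XF Q) (YF Q)")
        case True then show ?thesis using L6 by blast
      next
        case False
        then have "p \<in> regular_tangency (XF Q) (YF Q)" using T by (simp add: regular_tangency_def)
        then have "good Q \<phi> a 0" "good Q \<phi> 0 b"
          using L5 bwd_good[OF ab(1)] fwd_good[OF ab(2)] by blast+
        then show ?thesis by blast
      qed
    qed
  qed
qed

context psys begin

lemma piece:
  assumes loc: "local_traj (XF Q) (YF Q) p a b \<phi>" and w: "w \<in> {a..b}" and wL: "\<phi> w \<in> LamF P I"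
  shows "\<forall>t\<in>{a..b}. \<phi> t \<in> LamF P I \<and> EF c0 (\<phi> t) = EF c0 (\<phi> w) * cis (2*pi*(t-w))"
proof -
  have ab: "a \<le> 0" "0 \<le> b" "\<phi> 0 = p" using loc by (auto simp: local_traj_def)
  consider "good Q \<phi> a b" | "good Q \<phi> a 0" "good Q \<phi> 0 b"
    | "p \<in> singular_tangency (XF Q) (YF Q)" "\<forall>t\<in>{a..b}. \<phi> t = p"
    using local_cases[OF loc] by blast
  then show ?thesis
  proof cases
    case 1 show ?thesis by (rule good_prop[OF 1 _ w wL]) (use ab in auto)
  next
    case 3
    then have pS: "snd p = 0" by (simp add: singular_tangency_def Sigma_def sw_def)
    have "p \<in> LamF P I" using 3 w wL by auto
    then obtain x where x: "x \<in> I" "p = (x, P x) \<or> p = (x, - P x)" unfolding LamF_def by blast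
    then have "P x = 0" using pS by auto
    then have "p = (x, 0)" using x by auto
    then show ?thesis using H5[OF x(1) \<open>P x = 0\<close>] 3 by auto
  next
    case 2
    show ?thesis
    proof (cases "w \<le> 0")
      case True
      have A: "\<forall>t\<in>{a..0}. \<phi> t \<in> LamF P I \<and> EF c0 (\<phi> t) = EF c0 (\<phi> w) * cis (2*pi*(t-w))"
      proof (rule good_prop[OF 2(1) ab(1) _ wL])
        show "w \<in> {a..0}" using w True by auto
      qed
      moreover have "(0::real) \<in> {a..0}" using ab(1) by simp
      ultimately have A0: "\<phi> 0 \<in> LamF P I" "EF c0 (\<phi> 0) = EF c0 (\<phi> w) * cis (2*pi*(0-w))" by blast+
      have B: "\<forall>t\<in>{0..b}. \<phi> t \<in> LamF P I \<and> EF c0 (\<phi> t) = EF c0 (\<phi> 0) * cis (2*pi*(t-0))"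
      proof (rule good_prop[OF 2(2) ab(2) _ A0(1)])
        show "0 \<in> {0..b}" using ab by auto
      qed
      show ?thesis
      proof
        fix t assume t: "t \<in> {a..b}"
        show "\<phi> t \<in> LamF P I \<and> EF c0 (\<phi> t) = EF c0 (\<phi> w) * cis (2*pi*(t-w))"
        proof (cases "t \<le> 0")
          case True
          then have "t \<in> {a..0}" using t by simp
          then show ?thesis using A by blast
        next
          case False
          then have "t \<in> {0..b}" using t by simp
          then have 1: "\<phi> t \<in> LamF P I \<and> EF c0 (\<phi> t) = EF c0 (\<phi> 0) * cis (2*pi*(t-0))" using B by blast
          have 2: "cis (2*pi*(0-w)) * cis (2*pi*(t-0)) = cis (2*pi*(t-w))"
            by (simp add: cis_mult algebra_simps)
          have "EF c0 (\<phi> t) = EF c0 (\<phi> 0) * cis (2*pi*(t-0))" using 1 by blast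
          also have "\<dots> = EF c0 (\<phi> w) * (cis (2*pi*(0-w)) * cis (2*pi*(t-0)))"
            by (subst A0(2)) (rule mult.assoc)
          also have "\<dots> = EF c0 (\<phi> w) * cis (2*pi*(t-w))" by (simp only: 2)
          finally show ?thesis using 1 by blast
        qed
      qed
    next
      case False
      have B: "\<forall>t\<in>{0..b}. \<phi> t \<in> LamF P I \<and> EF c0 (\<phi> t) = EF c0 (\<phi> w) * cis (2*pi*(t-w))"
      proof (rule good_prop[OF 2(2) ab(2) _ wL])
        show "w \<in> {0..b}" using w False by auto
      qed
      moreover have "(0::real) \<in> {0..b}" using ab(2) by simp
      ultimately have B0: "\<phi> 0 \<in> LamF P I" "EF c0 (\<phi> 0) = EF c0 (\<phi> w) * cis (2*pi*(0-w))" by blast+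
      have A: "\<forall>t\<in>{a..0}. \<phi> t \<in> LamF P I \<and> EF c0 (\<phi> t) = EF c0 (\<phi> 0) * cis (2*pi*(t-0))"
      proof (rule good_prop[OF 2(1) ab(1) _ B0(1)])
        show "0 \<in> {a..0}" using ab by auto
      qed
      show ?thesis
      proof
        fix t assume t: "t \<in> {a..b}"
        show "\<phi> t \<in> LamF P I \<and> EF c0 (\<phi> t) = EF c0 (\<phi> w) * cis (2*pi*(t-w))"
        proof (cases "t \<le> 0")
          case False
          then have "t \<in> {0..b}" using t by simp
          then show ?thesis using B by blast
        next
          case True
          then have "t \<in> {a..0}" using t by simp
          then have 1: "\<phi> t \<in> LamF P I \<and> EF c0 (\<phi> t) = EF c0 (\<phi> 0) * cis (2*pi*(t-0))" using A by blast
          have 2: "cis (2*pi*(0-w)) * cis (2*pi*(t-0)) = cis (2*pi*(t-w))"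
            by (simp add: cis_mult algebra_simps)
          have "EF c0 (\<phi> t) = EF c0 (\<phi> 0) * cis (2*pi*(t-0))" using 1 by blast
          also have "\<dots> = EF c0 (\<phi> w) * (cis (2*pi*(0-w)) * cis (2*pi*(t-0)))"
            by (subst B0(2)) (rule mult.assoc)
          also have "\<dots> = EF c0 (\<phi> w) * cis (2*pi*(t-w))" by (simp only: 2)
          finally show ?thesis using 1 by blast
        qed
      qed
    qed
  qed
qed

end

lemma cover:
  fixes T :: "int \<Rightarrow> real"
  assumes "strict_mono T" "filterlim T at_top at_top" "filterlim T at_bot at_bot"
  shows "\<exists>i. T i \<le> t \<and> t \<le> T (i+1)"
proof -
  have aux: "\<forall>i. T i \<le> t \<longrightarrow> t < T (i + int n) \<longrightarrow> (\<exists>j. T j \<le> t \<and> t \<le> T (j+1))" for n :: nat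
  proof (induction n)
    case 0 then show ?case by auto
  next
    case (Suc n)
    show ?case
    proof (intro allI impI)
      fix i assume i: "T i \<le> t" "t < T (i + int (Suc n))"
      show "\<exists>j. T j \<le> t \<and> t \<le> T (j+1)"
      proof (cases "T (i+1) \<le> t")
        case True
        have "t < T ((i+1) + int n)" using i(2) by (simp add: add.assoc)
        then show ?thesis using Suc.IH True by blast
      next
        case False then show ?thesis using i by auto
      qed
    qed
  qed
  have "\<forall>\<^sub>F x in at_bot. T x \<le> t" using assms(3) by (simp add: filterlim_at_bot)
  then obtain N1 where N1: "\<forall>n\<le>N1. T n \<le> t" by (auto simp: eventually_at_bot_linorder)
  have "\<forall>\<^sub>F x in at_top. t + 1 \<le> T x" using assms(2) by (simp add: filterlim_at_top)
  then obtain N2 where N2: "\<forall>n\<ge>N2. t + 1 \<le> T n" by (auto simp: eventually_at_top_linorder)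
  let ?M = "max N2 (N1 + 1)"
  have "T N1 \<le> t" using N1 by auto
  moreover have "t < T (N1 + int (nat (?M - N1)))"
  proof -
    have "N1 + int (nat (?M - N1)) = ?M" by (auto simp: max_def)
    moreover have "t + 1 \<le> T ?M" using N2 by simp
    ultimately show ?thesis by simp
  qed
  ultimately show ?thesis using aux by blast
qed

context psys begin

lemma global:
  assumes g: "global_traj (XF Q) (YF Q) \<gamma>" and g0: "\<gamma> 0 \<in> LamF P I"
  shows "\<forall>t. \<gamma> t \<in> LamF P I \<and> EF c0 (\<gamma> t) = EF c0 (\<gamma> 0) * cis (2*pi*t)"
proof -
  define G where "G t \<longleftrightarrow> \<gamma> t \<in> LamF P I \<and> EF c0 (\<gamma> t) = EF c0 (\<gamma> 0) * cis (2*pi*t)" for t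
  obtain T :: "int \<Rightarrow> real" where T: "strict_mono T" "filterlim T at_top at_top" "filterlim T at_bot at_bot"
    and pc: "\<And>i. \<exists>s\<in>{T i..T (i+1)}. local_traj (XF Q) (YF Q) (\<gamma> s) (T i - s) (T (i+1) - s) (\<lambda>\<tau>. \<gamma> (s + \<tau>))"
    using g unfolding global_traj_def by blast
  have mono: "T i \<le> T (i+1)" for i using T(1) by (simp add: strict_mono_less_eq)
  have piece_G: "\<forall>t\<in>{T i..T (i+1)}. G t" if w: "w \<in> {T i..T (i+1)}" "G w" for i w
  proof
    fix t assume t: "t \<in> {T i..T (i+1)}"
    obtain s where s: "s \<in> {T i..T (i+1)}" and loc: "local_traj (XF Q) (YF Q) (\<gamma> s) (T i - s) (T (i+1) - s) (\<lambda>\<tau>. \<gamma> (s + \<tau>))"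
      using pc by blast
    have w': "w - s \<in> {T i - s..T (i+1) - s}" using w by auto
    have wL: "(\<lambda>\<tau>. \<gamma> (s + \<tau>)) (w - s) \<in> LamF P I" using w(2) unfolding G_def by simp
    have t': "t - s \<in> {T i - s..T (i+1) - s}" using t by auto
    have R: "(\<lambda>\<tau>. \<gamma> (s + \<tau>)) (t - s) \<in> LamF P I \<and> EF c0 ((\<lambda>\<tau>. \<gamma> (s + \<tau>)) (t - s))
        = EF c0 ((\<lambda>\<tau>. \<gamma> (s + \<tau>)) (w - s)) * cis (2*pi*((t-s)-(w-s)))"
      using piece[OF loc w' wL] t' by blast
    have "EF c0 (\<gamma> t) = EF c0 (\<gamma> w) * cis (2*pi*(t-w))" using R by simp
    also have "\<dots> = EF c0 (\<gamma> 0) * (cis (2*pi*w) * cis (2*pi*(t-w)))" using w(2) unfolding G_def by simp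
    also have "cis (2*pi*w) * cis (2*pi*(t-w)) = cis (2*pi*t)" by (simp add: cis_mult algebra_simps)
    finally show "G t" using R unfolding G_def by simp
  qed
  obtain i0 where i0: "T i0 \<le> 0" "0 \<le> T (i0+1)" using cover[OF T, of 0] by blast
  have G0: "G 0" using g0 unfolding G_def by simp
  define PP where "PP i \<longleftrightarrow> (\<forall>t\<in>{T i..T (i+1)}. G t)" for i
  have base: "PP i0"
  proof -
    have "0 \<in> {T i0..T (i0+1)}" using i0 by simp
    then show ?thesis unfolding PP_def by (rule piece_G[OF _ G0])
  qed
  have stepu: "PP (i+1)" if "PP i" for i
  proof -
    have a: "T (i+1) \<in> {T i..T (i+1)}" using mono[of i] by simp
    have "G (T (i+1))" using that a unfolding PP_def by blast
    moreover have "T (i+1) \<in> {T (i+1)..T (i+1+1)}" using mono[of "i+1"] by simp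
    ultimately show ?thesis unfolding PP_def using piece_G by blast
  qed
  have stepd: "PP (i-1)" if "PP i" for i
  proof -
    have a: "T i \<in> {T i..T (i+1)}" using mono[of i] by simp
    have "G (T i)" using that a unfolding PP_def by blast
    moreover have "T i \<in> {T (i-1)..T (i-1+1)}" using mono[of "i-1"] by simp
    ultimately show ?thesis unfolding PP_def using piece_G by blast
  qed
  have all: "PP i" for i
  proof (cases "i0 \<le> i")
    case True
    show ?thesis by (rule int_ge_induct[of i0 i PP, OF True base stepu])
  next
    case False
    then have "i \<le> i0" by simp
    show ?thesis by (rule int_le_induct[of i i0 PP, OF \<open>i \<le> i0\<close> base stepd])
  qed
  show ?thesis
  proof
    fix t
    obtain i where "T i \<le> t" "t \<le> T (i+1)" using cover[OF T] by blast
    then show "\<gamma> t \<in> LamF P I \<and> EF c0 (\<gamma> t) = EF c0 (\<gamma> 0) * cis (2*pi*t)"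
      using all[of i] unfolding PP_def G_def by auto
  qed
qed

end

lemma cis_eq_1: "cis a = 1 \<longleftrightarrow> (\<exists>n::int. a = of_int n * 2 * pi)"
proof
  assume "cis a = 1"
  then have "cos a = 1" by (metis cis.simps(1) one_complex.simps(1))
  then show "\<exists>n::int. a = of_int n * 2 * pi" using cos_one_2pi_int by auto
next
  assume "\<exists>n::int. a = of_int n * 2 * pi"
  then have c: "cos a = 1" using cos_one_2pi_int by auto
  then have "sin a = 0" using sin_cos_squared_add[of a] by simp
  then show "cis a = 1" using c by (simp add: complex_eq_iff)
qed

lemma unique_time:
  "\<exists>!t'. t' \<in> {t..<t+1} \<and> (\<exists>n::int. \<theta> + 2*pi*t' = of_int n * 2 * pi)"
proof -
  define n where "n = \<lceil>t + \<theta>/(2*pi)\<rceil>"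
  have n1: "t + \<theta>/(2*pi) \<le> of_int n" unfolding n_def by simp
  have n2: "of_int n < t + \<theta>/(2*pi) + 1" unfolding n_def by linarith
  have key: "\<theta> + 2*pi*t' = of_int m * 2 * pi \<longleftrightarrow> t' = of_int m - \<theta>/(2*pi)" for t' and m :: int
    by (auto simp: field_simps)
  show ?thesis
  proof (rule ex1I[of _ "of_int n - \<theta>/(2*pi)"])
    show "of_int n - \<theta>/(2*pi) \<in> {t..<t+1} \<and> (\<exists>m::int. \<theta> + 2*pi*(of_int n - \<theta>/(2*pi)) = of_int m * 2 * pi)"
      using n1 n2 key by auto
  next
    fix y assume y: "y \<in> {t..<t+1} \<and> (\<exists>m::int. \<theta> + 2*pi*y = of_int m * 2 * pi)"
    then obtain m :: int where m: "y = of_int m - \<theta>/(2*pi)" using key by blast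
    have "of_int m < of_int n + (1::real)" "of_int n < of_int m + (1::real)" using y m n1 n2 by auto
    then have "m = n" by linarith
    then show "y = of_int n - \<theta>/(2*pi)" using m by simp
  qed
qed

context psys begin

theorem final:
  assumes g: "global_traj (XF Q) (YF Q) \<gamma>" and g0: "\<gamma> 0 \<in> LamF P I"
  shows "\<forall>t. \<exists>!t'. t' \<in> {t..<t+1} \<and> \<gamma> t' \<in> Tgt"
proof -
  have A: "\<forall>t. \<gamma> t \<in> LamF P I \<and> EF c0 (\<gamma> t) = EF c0 (\<gamma> 0) * cis (2*pi*t)" using global[OF g g0] .
  obtain \<theta> where th: "EF c0 (\<gamma> 0) = cis \<theta>"
  proof -
    obtain x where x: "x \<in> I" "\<gamma> 0 = (x, P x) \<or> \<gamma> 0 = (x, - P x)" using g0 unfolding LamF_def by blast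
    then show ?thesis using that E_upper E_lower by metis
  qed
  have eq: "\<gamma> t' \<in> Tgt \<longleftrightarrow> (\<exists>n::int. \<theta> + 2*pi*t' = of_int n * 2 * pi)" for t'
  proof -
    have "\<gamma> t' \<in> Tgt \<longleftrightarrow> EF c0 (\<gamma> t') = 1" using H6 A by blast
    also have "\<dots> \<longleftrightarrow> cis (\<theta> + 2*pi*t') = 1" using A th by (simp add: cis_mult)
    finally show ?thesis using cis_eq_1 by simp
  qed
  show ?thesis unfolding eq using unique_time by blast
qed

end



lemma Lie2_XF:
  assumes "(Q has_real_derivative D) (at (fst p))"
  shows "Lie2 (XF Q) p = D" "Lie2 (YF Q) p = - D"
proof -
  have L: "Lie1 (XF Q) = (\<lambda>p. Q (fst p))" "Lie1 (YF Q) = (\<lambda>p. Q (fst p))" by (auto simp: Lie1_XF Lie1_YF)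
  have "((\<lambda>p. Q (fst p)) has_derivative (\<lambda>h. D * fst h)) (at p)"
    using has_derivative_compose[OF has_derivative_fst[OF has_derivative_ident, of "at p"], of Q "(*) D"]
      assms by (simp add: has_field_derivative_def)
  then have F: "frechet_derivative (\<lambda>p. Q (fst p)) (at p) = (\<lambda>h. D * fst h)"
    by (metis frechet_derivative_at)
  show "Lie2 (XF Q) p = D" "Lie2 (YF Q) p = - D"
    unfolding Lie2_def L F by (simp_all add: XF_def YF_def case_prod_beta)
qed

lemma not_singular:
  assumes "(Q has_real_derivative D) (at x)" "Q x = 0 \<Longrightarrow> \<not> D < 0"
  shows "(x, y) \<notin> singular_tangency (XF Q) (YF Q)"
  using Lie2_XF[of Q D "(x,y)"] assms by (auto simp: singular_tangency_def Lie1_XF)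

lemma LamF_E:
  assumes "q \<in> LamF P I"
  obtains x e where "x \<in> I" "e = 1 \<or> e = -1" "q = (x, e * P x)"
proof -
  obtain x where x: "x \<in> I" "q = (x, P x) \<or> q = (x, - P x)" using assms unfolding LamF_def by blast
  show ?thesis
  proof (cases "q = (x, P x)")
    case True then show ?thesis using that[of x 1] x by simp
  next
    case False then show ?thesis using that[of x "-1"] x by simp
  qed
qed

lemma Xinf_eq: "Xinf = XF (\<lambda>x. 2 * sin (2 * pi * x))" by (simp add: Xinf_def XF_def)
lemma Yinf_eq: "Yinf = YF (\<lambda>x. 2 * sin (2 * pi * x))" by (simp add: Yinf_def YF_def)
lemma Laminf_eq: "Lambdainf = LamF Pinf UNIV" by (simp add: Lambdainf_def LamF_def)

lemma Pinf_zero: "Pinf x = 0 \<longleftrightarrow> cos (2*pi*x) = 1"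
  by (simp add: Pinf_def)

lemma cos1_sin0: "cos (a::real) = 1 \<Longrightarrow> sin a = 0"
  using sin_cos_squared_add[of a] by simp

abbreviation "Qinf \<equiv> (\<lambda>x::real. 2 * sin (2 * pi * x))"

lemma inf_Pder: "(Pinf has_real_derivative Qinf x) (at x)"
  unfolding Pinf_def[abs_def]
  by (rule derivative_eq_intros refl | simp)+

lemma inf_H5: "Pinf x = 0 \<Longrightarrow> (x, 0) \<notin> singular_tangency (XF Qinf) (YF Qinf)"
proof (rule not_singular)
  show "(Qinf has_real_derivative 2 * (cos (2*pi*x) * (2*pi))) (at x)"
    by (rule derivative_eq_intros refl | simp)+
  assume "Pinf x = 0"
  then show "\<not> 2 * (cos (2*pi*x) * (2*pi)) < 0" by (simp add: Pinf_zero)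
qed

lemma inf_H6:
  assumes "q \<in> LamF Pinf UNIV"
  shows "q \<in> {(real_of_int j, 0) | j::int. True} \<longleftrightarrow> EF 0 q = 1"
proof -
  obtain x e where q: "q = (x, e * Pinf x)" and e: "e = 1 \<or> e = -1" using assms by (rule LamF_E) blast
  have Pz: "Pinf (of_int j) = 0" for j :: int
    by (simp add: Pinf_zero cos_one_2pi_int)
  have E: "EF 0 q = cis (e * (2*pi*x))"
  proof (cases "Pinf x = 0")
    case True
    then have "sin (2*pi*x) = 0" using cos1_sin0 by (simp add: Pinf_zero)
    then show ?thesis using True e q by (auto simp: EF_def cis_eq_Complex Pinf_zero)
  next
    case False
    then have "Pinf x > 0" by (simp add: Pinf_def less_le)
    then show ?thesis using e q by (auto simp: EF_def cis_eq_Complex sgn_mult)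
  qed
  show ?thesis
  proof
    assume "q \<in> {(real_of_int j, 0) | j::int. True}"
    then obtain j :: int where j: "x = of_int j" using q by auto
    have "e * (2*pi*x) = of_int (if e = 1 then j else -j) * 2 * pi" using e j by auto
    then show "EF 0 q = 1" unfolding E cis_eq_1 by blast
  next
    assume "EF 0 q = 1"
    then obtain n :: int where n: "e * (2*pi*x) = of_int n * 2 * pi" unfolding E cis_eq_1 by blast
    have "x = of_int (if e = 1 then n else -n)" using e n by auto
    then show "q \<in> {(real_of_int j, 0) | j::int. True}" using q Pz by auto
  qed
qed

lemma psys_inf: "psys Pinf Qinf UNIV 0 {(real_of_int j, 0) | j::int. True}"
  apply (unfold_locales)
  using inf_Pder apply blast
  apply (simp add: Pinf_zero cos1_sin0)
  apply simp
  apply (simp add: Pinf_def)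
  using inf_H5 apply blast
  using inf_H6 apply blast
  done
theorem part_b:
  "\<forall>\<gamma>. global_traj Xinf Yinf \<gamma> \<and> \<gamma> 0 \<in> Lambdainf \<longrightarrow>
            (\<forall>t::real. \<exists>!t'. t' \<in> {t..<t+1} \<and>
               \<gamma> t' \<in> {(real_of_int j, 0) | j::int. True})"
  using psys.final[OF psys_inf] unfolding Xinf_eq Yinf_eq Laminf_eq by blast



definition pq :: "nat \<Rightarrow> real poly" where
  "pq k = smult (-1) ([:(real k - 1)/2, 1:] * [:-((real k - 1)/2), 1:] *
     (\<Prod>i\<in>{1..k-1}. [:-(real i - real k/2), 1:]^2))"

lemma poly_pq: "poly (pq k) x = Pk k x"
proof -
  have 1: "poly [:(real k - 1)/2, 1:] x = x + (real k - 1)/2" by simp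
  have 2: "poly [:-((real k - 1)/2), 1:] x = x - (real k - 1)/2" by simp
  have 3: "poly (\<Prod>i\<in>{1..k-1}. [:-(real i - real k/2), 1:]^2) x = (\<Prod>i\<in>{1..k-1}. (x - (real i - real k / 2))^2)"
    unfolding poly_prod by (intro prod.cong refl) (simp add: poly_power algebra_simps)
  have aux: "-1 * ((x + a) * (x - a) * c) = - (x + a) * (x - a) * (c::real)" for a c by (simp add: algebra_simps)
  show ?thesis unfolding pq_def poly_smult poly_mult 1 2 3 Pk_def by (rule aux)
qed

lemma Pk_eq: "Pk k = poly (pq k)" by (rule ext) (simp add: poly_pq)

lemma Pk_der: "(Pk k has_real_derivative deriv (Pk k) x) (at x)"
  unfolding Pk_eq using poly_DERIV DERIV_imp_deriv by metis

lemma Qk_eq: "deriv (Pk k) = poly (pderiv (pq k))"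
  unfolding Pk_eq by (rule ext) (rule DERIV_imp_deriv[OF poly_DERIV])

lemma Qk_der: "(deriv (Pk k) has_real_derivative poly (pderiv (pderiv (pq k))) x) (at x)"
  unfolding Qk_eq by (rule poly_DERIV)

lemma Pk_zero: "Pk k x = 0 \<longleftrightarrow> x = -((real k - 1)/2) \<or> x = (real k - 1)/2 \<or> (\<exists>i\<in>{1..k-1}. x = real i - real k/2)"
  unfolding Pk_def mult_eq_0_iff neg_equal_0_iff_equal prod_zero_iff[OF finite_atLeastAtMost] power_eq_0_iff
  by (auto simp del: of_nat_diff)

lemma EF_arc_gen:
  assumes "0 \<le> P x" "P x = 0 \<Longrightarrow> sin (2*pi*(x+c0)) = 0" "e = 1 \<or> e = -1"
  shows "EF c0 (x, e * P x) = cis (e*(2*pi*(x+c0)))"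
proof (cases "P x = 0")
  case True
  then show ?thesis using assms by (auto simp: EF_def cis_eq_Complex)
next
  case False
  then have "P x > 0" using assms(1) by simp
  then show ?thesis using assms(3) by (auto simp: EF_def cis_eq_Complex sgn_mult)
qed

lemma no_neg_second:
  fixes P Q :: "real \<Rightarrow> real"
  assumes Pder: "\<And>y. (P has_real_derivative Q y) (at y)"
  and Qd: "(Q has_real_derivative D) (at x)"
  and ab: "a < b" "a \<le> x" "x \<le> b" and nn: "\<And>y. a \<le> y \<Longrightarrow> y \<le> b \<Longrightarrow> 0 \<le> P y"
  and P0: "P x = 0" and Q0: "Q x = 0" and D: "D < 0"
  shows False
proof (cases "x < b")
  case True
  obtain d where d: "d > 0" "\<forall>h>0. h < d \<longrightarrow> Q (x + h) < Q x" using DERIV_neg_dec_right[OF Qd D] by blast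
  define h where "h = min d (b - x) / 2"
  have m: "min d (b - x) \<le> b - x" "min d (b - x) \<le> d" "0 < min d (b - x)" using d True by auto
  obtain m0 where m0: "m0 = min d (b - x)" by blast
  have mm: "m0 \<le> b - x" "m0 \<le> d" "0 < m0" using m m0 by auto
  have hm: "h = m0 / 2" using h_def m0 by simp
  have h1: "0 < h" using mm hm by simp
  have h2: "h < d" using mm hm by simp
  have h3: "x + h \<le> b" using mm hm by simp
  note h = h1 h2 h3
  obtain z where z: "x < z" "z < x + h" "P (x + h) - P x = (x + h - x) * Q z"
    using MVT2[of x "x + h" P Q] h(1) Pder by auto
  have "Q (x + (z - x)) < Q x" using d(2)[rule_format, of "z - x"] z h by linarith
  then have "Q z < 0" using Q0 by simp
  then have "P (x + h) < 0" using z(3) P0 h(1) by (simp add: mult_pos_neg)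
  moreover have "0 \<le> P (x + h)" using nn ab h by auto
  ultimately show False by simp
next
  case False
  then have xb: "x = b" using ab by simp
  obtain d where d: "d > 0" "\<forall>h>0. h < d \<longrightarrow> Q x < Q (x - h)" using DERIV_neg_dec_left[OF Qd D] by blast
  define h where "h = min d (x - a) / 2"
  have m: "min d (x - a) \<le> x - a" "min d (x - a) \<le> d" "0 < min d (x - a)" using d xb ab by auto
  obtain m0 where m0: "m0 = min d (x - a)" by blast
  have mm: "m0 \<le> x - a" "m0 \<le> d" "0 < m0" using m m0 by auto
  have hm: "h = m0 / 2" using h_def m0 by simp
  have h1: "0 < h" using mm hm by simp
  have h2: "h < d" using mm hm by simp
  have h3: "a \<le> x - h" using mm hm by simp
  note h = h1 h2 h3
  obtain z where z: "x - h < z" "z < x" "P x - P (x - h) = (x - (x - h)) * Q z"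
    using MVT2[of "x - h" x P Q] h(1) Pder by auto
  have "Q x < Q (x - (x - z))" using d(2)[rule_format, of "x - z"] z h by linarith
  then have "Q z > 0" using Q0 by simp
  moreover have "0 < h * Q z" using h(1) \<open>Q z > 0\<close> by simp
  ultimately have "P (x - h) < 0" using z(3) P0 by simp
  moreover have "0 \<le> P (x - h)" using nn ab h by auto
  ultimately show False by simp
qed

lemma r0_eq: "r0 k = -((real k - 1)/2)" by (simp add: r0_def field_simps)
lemma r1_eq: "r1 k = (real k - 1)/2" by (simp add: r1_def)

context
  fixes k :: nat
  assumes k2: "k \<ge> 2"
begin

lemma k_H1:
  assumes "Pk k x = 0"
  shows "sin (2*pi*(x + real k/2)) = 0"
proof -
  consider "x = -((real k - 1)/2)" | "x = (real k - 1)/2" | i where "i \<in> {1..k-1}" "x = real i - real k/2"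
    using assms Pk_zero by blast
  then show ?thesis
  proof cases
    case 1
    have "2*pi*(x + real k/2) = of_int 1 * pi" using 1 by (simp add: field_simps)
    then show ?thesis by (metis sin_zero_iff_int2)
  next
    case 2
    have "x + real k/2 = real k - 1/2" using 2 by (simp add: field_simps)
    moreover have "2*pi*(real k - 1/2) = of_int (2 * int k - 1) * pi" by (simp add: algebra_simps)
    ultimately have "2*pi*(x + real k/2) = of_int (2 * int k - 1) * pi" by simp
    then show ?thesis by (metis sin_zero_iff_int2)
  next
    case 3
    have "2*pi*(x + real k/2) = of_int (2 * int i) * pi" using 3 by (simp add: field_simps)
    then show ?thesis by (metis sin_zero_iff_int2)
  qed
qed

lemma k_inner: "i \<in> {1..k-1} \<Longrightarrow> 1 - real k/2 \<le> real i - real k/2 \<and> real i - real k/2 \<le> real k/2 - 1"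
  using k2 by (auto simp: of_nat_diff)

lemma k_H2:
  assumes "0 \<le> Pk k x"
  shows "r0 k \<le> x \<and> x \<le> r1 k"
proof (rule ccontr)
  let ?r = "(real k - 1)/2"
  assume A: "\<not> (r0 k \<le> x \<and> x \<le> r1 k)"
  then have A': "x < - ?r \<or> x > ?r" unfolding r0_eq r1_eq by linarith
  have pp: "0 < (\<Prod>i\<in>{1..k-1}. (x - (real i - real k / 2))^2)"
  proof (rule prod_pos)
    fix i assume i: "i \<in> {1..k-1}"
    have "x \<noteq> real i - real k / 2"
    proof
      assume "x = real i - real k / 2"
      moreover have "1 - real k/2 \<le> real i - real k/2" "real i - real k/2 \<le> real k/2 - 1"
        using k_inner[OF i] by auto
      ultimately show False using A' by (auto simp: field_simps)
    qed
    then show "0 < (x - (real i - real k / 2))^2" by simp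
  qed
  have r0: "0 \<le> ?r" using k2 by simp
  have "0 < (x + ?r) * (x - ?r)"
  proof (cases "x < - ?r")
    case True
    then have "x + ?r < 0" "x - ?r < 0" using r0 by linarith+
    then show ?thesis by (rule mult_neg_neg)
  next
    case False
    then have "x > ?r" using A' by blast
    then have "x + ?r > 0" "x - ?r > 0" using r0 by linarith+
    then show ?thesis by (rule mult_pos_pos)
  qed
  then have "- ((x + ?r) * (x - ?r)) < 0" by simp
  then have n: "- (x + ?r) * (x - ?r) < 0" by (simp only: minus_mult_left)
  have "Pk k x = (- (x + ?r) * (x - ?r)) * (\<Prod>i\<in>{1..k-1}. (x - (real i - real k / 2))^2)"
    by (simp only: Pk_def)
  then have "Pk k x < 0" using mult_neg_pos[OF n pp] by simp
  then show False using assms by simp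
qed

lemma k_H3:
  assumes "r0 k \<le> x" "x \<le> r1 k"
  shows "0 \<le> Pk k x"
proof -
  let ?r = "(real k - 1)/2"
  have "0 \<le> x + ?r" "0 \<le> ?r - x" using assms unfolding r0_eq r1_eq by linarith+
  then have "0 \<le> (x + ?r) * (?r - x)" by simp
  moreover have "- (x + ?r) * (x - ?r) = (x + ?r) * (?r - x)" by (simp only: minus_mult_commute minus_diff_eq)
  moreover have "0 \<le> (\<Prod>i\<in>{1..k-1}. (x - (real i - real k / 2))^2)" by (rule prod_nonneg) simp
  ultimately show ?thesis unfolding Pk_def by simp
qed

lemma k_H5:
  assumes "r0 k \<le> x" "x \<le> r1 k" "Pk k x = 0"
  shows "(x, 0) \<notin> singular_tangency (XF (deriv (Pk k))) (YF (deriv (Pk k)))"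
proof (rule not_singular[OF Qk_der])
  assume "deriv (Pk k) x = 0"
  then show "\<not> poly (pderiv (pderiv (pq k))) x < 0"
    using no_neg_second[OF Pk_der Qk_der, of "r0 k" "r1 k" x k] assms k2 k_H3
    by (auto simp: r0_def r1_def)
qed

lemma k_H6:
  assumes "q \<in> LamF (Pk k) {x. r0 k \<le> x \<and> x \<le> r1 k}"
  shows "q \<in> {(pj k j, 0) | j. 1 \<le> j \<and> j \<le> k - 1} \<longleftrightarrow> EF (real k/2) q = 1"
proof -
  obtain x e where xI: "x \<in> {x. r0 k \<le> x \<and> x \<le> r1 k}" and e: "e = 1 \<or> e = -1" and q: "q = (x, e * Pk k x)"
    using assms by (rule LamF_E) blast
  have E: "EF (real k/2) q = cis (e * (2*pi*(x + real k/2)))"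
    unfolding q by (rule EF_arc_gen[OF _ k_H1 e]) (use xI k_H3 in auto)
  show ?thesis
  proof
    assume "q \<in> {(pj k j, 0) | j. 1 \<le> j \<and> j \<le> k - 1}"
    then obtain j where j: "x = pj k j" using q by auto
    have "e * (2*pi*(x + real k/2)) = of_int (if e = 1 then int j else - int j) * 2 * pi"
      using e j by (auto simp: pj_def)
    then show "EF (real k/2) q = 1" unfolding E cis_eq_1 by blast
  next
    assume "EF (real k/2) q = 1"
    then obtain n :: int where n: "e * (2*pi*(x + real k/2)) = of_int n * 2 * pi" unfolding E cis_eq_1 by blast
    define m where "m = (if e = 1 then n else -n)"
    have xm: "x + real k/2 = of_int m" using e n unfolding m_def by auto
    have "0 < real_of_int m" "real_of_int m < real k" using xI xm by (auto simp: r0_def r1_def)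
    then have m: "1 \<le> m" "m \<le> int k - 1" by linarith+
    define j where "j = nat m"
    have j: "1 \<le> j" "j \<le> k - 1" using m unfolding j_def by auto
    have xj: "x = real j - real k/2" using xm m unfolding j_def by auto
    have "Pk k x = 0" unfolding Pk_zero using j xj by auto
    then have "q = (pj k j, 0)" using q xj by (simp add: pj_def)
    then show "q \<in> {(pj k j, 0) | j. 1 \<le> j \<and> j \<le> k - 1}" using j by blast
  qed
qed

lemma psys_k: "psys (Pk k) (deriv (Pk k)) {x. r0 k \<le> x \<and> x \<le> r1 k} (real k/2) {(pj k j, 0) | j. 1 \<le> j \<and> j \<le> k - 1}"
  apply unfold_locales
  using Pk_der apply blast
  using k_H1 apply (simp add: add.commute)
  using k_H2 apply blast
  using k_H3 apply blast
  using k_H5 apply blast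
  using k_H6 apply blast
  done

end

lemma Xk_eq: "Xk k = XF (deriv (Pk k))" by (simp add: Xk_def XF_def)
lemma Yk_eq: "Yk k = YF (deriv (Pk k))" by (simp add: Yk_def YF_def)
lemma Lamk_eq: "Lambdak k = LamF (Pk k) {x. r0 k \<le> x \<and> x \<le> r1 k}" by (simp add: Lambdak_def LamF_def)

theorem part_a:
  "\<forall>k::nat. k \<ge> 2 \<longrightarrow> (\<forall>\<gamma>. global_traj (Xk k) (Yk k) \<gamma> \<and> \<gamma> 0 \<in> Lambdak k \<longrightarrow>
            (\<forall>t::real. \<exists>!t'. t' \<in> {t..<t+1} \<and>
               \<gamma> t' \<in> {(pj k j, 0) | j. 1 \<le> j \<and> j \<le> k - 1}))"
  using psys.final[OF psys_k] unfolding Xk_eq Yk_eq Lamk_eq by blast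


theorem mainTheorem11:
  shows "(\<forall>k::nat. k \<ge> 2 \<longrightarrow> (\<forall>\<gamma>. global_traj (Xk k) (Yk k) \<gamma> \<and> \<gamma> 0 \<in> Lambdak k \<longrightarrow>
            (\<forall>t::real. \<exists>!t'. t' \<in> {t..<t+1} \<and>
               \<gamma> t' \<in> {(pj k j, 0) | j. 1 \<le> j \<and> j \<le> k - 1})))
       \<and> (\<forall>\<gamma>. global_traj Xinf Yinf \<gamma> \<and> \<gamma> 0 \<in> Lambdainf \<longrightarrow>
            (\<forall>t::real. \<exists>!t'. t' \<in> {t..<t+1} \<and>
               \<gamma> t' \<in> {(real_of_int j, 0) | j::int. True}))"
  using part_a part_b by (rule conjI)

end
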